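(* Let $\mathcal L$ be a linearly ordered non-discrete MV-algebra. On the set of filters (in the sense below), define $\mathcal F\equiv\mathcal G$ iff $\mathcal F\sqsubseteq\!\!\to\mathcal G=\mathcal G\sqsubseteq\!\!\to\mathcal F=\{1\}$. Then $\equiv$ is an equivalence relation. Moreover, it is a congruence for ${}^+$ and $\sqsubseteq\!\!\to$: if $\mathcal F_1\equiv\mathcal F_2$ and $\mathcal G_1\equiv\mathcal G_2$, then $\mathcal F_1^+\equiv\mathcal F_2^+$ and $\mathcal F_1\sqsubseteq\!\!\to\mathcal G_1\equiv\mathcal F_2\sqsubseteq\!\!\to\mathcal G_2$.
   Context: $\mathcal L=(L,\oplus,\lnot,0)$ is a linearly ordered MV-algebra. We write $1=\lnot0$, $x\otimes y=\lnot(\lnot x\oplus\lnot y)$, and $x\to y=\lnot x\oplus y$. Non-discrete means no element has an immediate successor or an immediate predecessor. A "filter" means a nonempty proper upward-closed subset $\mathcal F$ of $L$ with kernel $\mathcal K(\mathcal F)=\{z:\forall a\notin\mathcal F,\ z\to a\notin\mathcal F\}=\{1\}$. For upward-closed $\mathcal F$ and $a\in L$, let $\mathcal F_a=\{z:z\to a\notin\mathcal F\}$ and $\mathcal F^+=\mathcal F_0=\{z:\lnot z\notin\mathcal F\}$. For $\mathcal F\subseteq\mathcal G$ we put $\mathcal F\sqsubseteq\!\!\to\mathcal G=\bigcap_{a\in L\setminus\mathcal G}\mathcal F_a$, and in general $\mathcal F\sqsubseteq\!\!\to\mathcal G:=(\mathcal F\cap\mathcal G)\sqsubseteq\!\!\to\mathcal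 G$. *)

theory Defs
  imports Main
begin

definition mv_one :: "('a \<Rightarrow> 'a) \<Rightarrow> 'a \<Rightarrow> 'a" where
  "mv_one neg zero = neg zero"

definition mv_imp :: "('a \<Rightarrow> 'a \<Rightarrow> 'a) \<Rightarrow> ('a \<Rightarrow> 'a) \<Rightarrow> 'a \<Rightarrow> 'a \<Rightarrow> 'a" where
  "mv_imp oplus neg x y = oplus (neg x) y"

definition mv_algebra :: "('a \<Rightarrow> 'a \<Rightarrow> 'a) \<Rightarrow> ('a \<Rightarrow> 'a) \<Rightarrow> 'a \<Rightarrow> bool" where
  "mv_algebra oplus neg zero \<longleftrightarrow>
     (\<forall>x y z. oplus x (oplus y z) = oplus (oplus x y) z) \<and>
     (\<forall>x y. oplus x y = oplus y x) \<and>
     (\<forall>x. oplus x zero = x) \<and>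
     (\<forall>x. neg (neg x) = x) \<and>
     (\<forall>x. oplus x (neg zero) = neg zero) \<and>
     (\<forall>x y. oplus (neg (oplus (neg x) y)) y = oplus (neg (oplus (neg y) x)) x)"

definition mv_le :: "('a \<Rightarrow> 'a \<Rightarrow> 'a) \<Rightarrow> ('a \<Rightarrow> 'a) \<Rightarrow> 'a \<Rightarrow> 'a \<Rightarrow> 'a \<Rightarrow> bool" where
  "mv_le oplus neg zero x y \<longleftrightarrow> mv_imp oplus neg x y = mv_one neg zero"

definition mv_less :: "('a \<Rightarrow> 'a \<Rightarrow> 'a) \<Rightarrow> ('a \<Rightarrow> 'a) \<Rightarrow> 'a \<Rightarrow> 'a \<Rightarrow> 'a \<Rightarrow> bool" where
  "mv_less oplus neg zero x y \<longleftrightarrow> mv_le oplus neg zero x y \<and> x \<noteq> y"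

definition linear_mv :: "('a \<Rightarrow> 'a \<Rightarrow> 'a) \<Rightarrow> ('a \<Rightarrow> 'a) \<Rightarrow> 'a \<Rightarrow> bool" where
  "linear_mv oplus neg zero \<longleftrightarrow> mv_algebra oplus neg zero \<and>
     (\<forall>x y. mv_le oplus neg zero x y \<or> mv_le oplus neg zero y x)"

definition non_discrete :: "('a \<Rightarrow> 'a \<Rightarrow> 'a) \<Rightarrow> ('a \<Rightarrow> 'a) \<Rightarrow> 'a \<Rightarrow> bool" where
  "non_discrete oplus neg zero \<longleftrightarrow>
     (\<forall>x. \<not> (\<exists>y. mv_less oplus neg zero x y \<and>
                 \<not> (\<exists>z. mv_less oplus neg zero x z \<and> mv_less oplus neg zero z y))) \<and>
     (\<forall>x. \<not> (\<exists>y. mv_less oplus neg zero y x \<and>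
                 \<not> (\<exists>z. mv_less oplus neg zero y z \<and> mv_less oplus neg zero z x)))"

definition up_closed :: "('a \<Rightarrow> 'a \<Rightarrow> 'a) \<Rightarrow> ('a \<Rightarrow> 'a) \<Rightarrow> 'a \<Rightarrow> 'a set \<Rightarrow> bool" where
  "up_closed oplus neg zero F \<longleftrightarrow> (\<forall>x y. x \<in> F \<longrightarrow> mv_le oplus neg zero x y \<longrightarrow> y \<in> F)"

definition kernel :: "('a \<Rightarrow> 'a \<Rightarrow> 'a) \<Rightarrow> ('a \<Rightarrow> 'a) \<Rightarrow> 'a set \<Rightarrow> 'a set" where
  "kernel oplus neg F = {z. \<forall>a. a \<notin> F \<longrightarrow> mv_imp oplus neg z a \<notin> F}"

definition mv_filter :: "('a \<Rightarrow> 'a \<Rightarrow> 'a) \<Rightarrow> ('a \<Rightarrow> 'a) \<Rightarrow> 'a \<Rightarrow> 'a set \<Rightarrow> bool" where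
  "mv_filter oplus neg zero F \<longleftrightarrow> F \<noteq> {} \<and> F \<noteq> UNIV \<and> up_closed oplus neg zero F \<and>
     kernel oplus neg F = {mv_one neg zero}"

definition sub_at :: "('a \<Rightarrow> 'a \<Rightarrow> 'a) \<Rightarrow> ('a \<Rightarrow> 'a) \<Rightarrow> 'a set \<Rightarrow> 'a \<Rightarrow> 'a set" where
  "sub_at oplus neg F a = {z. mv_imp oplus neg z a \<notin> F}"

definition fplus :: "('a \<Rightarrow> 'a \<Rightarrow> 'a) \<Rightarrow> ('a \<Rightarrow> 'a) \<Rightarrow> 'a \<Rightarrow> 'a set \<Rightarrow> 'a set" where
  "fplus oplus neg zero F = sub_at oplus neg F zero"

text \<open>F \<sqsubseteq>\<rightarrow> G = \<Inter>_{a \<notin> G} (F \<inter> G)_a (general form; agrees with the F \<subseteq> G case).\<close>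
definition farr :: "('a \<Rightarrow> 'a \<Rightarrow> 'a) \<Rightarrow> ('a \<Rightarrow> 'a) \<Rightarrow> 'a set \<Rightarrow> 'a set \<Rightarrow> 'a set" where
  "farr oplus neg F G = (\<Inter>a \<in> - G. sub_at oplus neg (F \<inter> G) a)"

definition fequiv :: "('a \<Rightarrow> 'a \<Rightarrow> 'a) \<Rightarrow> ('a \<Rightarrow> 'a) \<Rightarrow> 'a \<Rightarrow> 'a set \<Rightarrow> 'a set \<Rightarrow> bool" where
  "fequiv oplus neg zero F G \<longleftrightarrow>
     farr oplus neg F G = {mv_one neg zero} \<and> farr oplus neg G F = {mv_one neg zero}"

end

theory Submission imports Defs begin

locale mvl =
  fixes oplus :: "'a \<Rightarrow> 'a \<Rightarrow> 'a" (infixl "\<oplus>" 65) and neg :: "'a \<Rightarrow> 'a" and zero :: 'a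
  assumes lin: "linear_mv oplus neg zero"
begin

abbreviation one where "one \<equiv> neg zero"
abbreviation le (infix "\<preceq>" 50) where "x \<preceq> y \<equiv> mv_le oplus neg zero x y"
definition times (infixl "\<odot>" 70) where "x \<odot> y = neg (neg x \<oplus> neg y)"
abbreviation imp where "imp x y \<equiv> mv_imp oplus neg x y"
abbreviation up where "up X \<equiv> up_closed oplus neg zero X"
definition DD where "DD X Y = {z. \<forall>f\<in>X. z \<odot> f \<in> Y}"

lemma ax:
  "\<And>x y z. x \<oplus> (y \<oplus> z) = (x \<oplus> y) \<oplus> z"
  "\<And>x y. x \<oplus> y = y \<oplus> x"
  "\<And>x. x \<oplus> zero = x"
  "\<And>x. neg (neg x) = x"
  "\<And>x. x \<oplus> one = one"
  "\<And>x y. neg (neg x \<oplus> y) \<oplus> y = neg (neg y \<oplus> x) \<oplus> x"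
  using lin unfolding linear_mv_def mv_algebra_def by (elim conjE, blast)+

lemma linear: "x \<preceq> y \<or> y \<preceq> x" using lin unfolding linear_mv_def by blast

lemma le_def': "x \<preceq> y \<longleftrightarrow> neg x \<oplus> y = one" unfolding mv_le_def mv_imp_def mv_one_def by simp
lemma imp_def': "imp x y = neg x \<oplus> y" unfolding mv_imp_def by simp

lemma ac1: "x \<oplus> y \<oplus> z = x \<oplus> (y \<oplus> z)" using ax(1) by simp
lemma ac2: "x \<oplus> y = y \<oplus> x" by (rule ax(2))
lemma ac3: "x \<oplus> (y \<oplus> z) = y \<oplus> (x \<oplus> z)" by (simp only: ac1[symmetric] ac2[of x y])
lemmas ac = ac1 ac2 ac3

lemma zero_l[simp]: "zero \<oplus> x = x" using ax(3)[of x] ax(2)[of zero x] by simp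
lemma zero_r[simp]: "x \<oplus> zero = x" by (rule ax(3))
lemma nn[simp]: "neg (neg x) = x" by (rule ax(4))
lemma one_r[simp]: "x \<oplus> one = one" by (rule ax(5))
lemma one_l[simp]: "one \<oplus> x = one" using ax(5)[of x] ax(2)[of one x] by simp
lemma neg_one[simp]: "neg one = zero" by simp
lemma compl[simp]: "x \<oplus> neg x = one"
proof -
  have "neg (neg x \<oplus> one) \<oplus> one = neg (neg one \<oplus> x) \<oplus> x" by (rule ax(6))
  thus ?thesis using ax(2) by simp
qed
lemma compl'[simp]: "neg x \<oplus> x = one" using compl[of x] ac2[of x "neg x"] by simp

lemma le_refl[simp]: "x \<preceq> x" by (simp add: le_def')
lemma le_antisym: "x \<preceq> y \<Longrightarrow> y \<preceq> x \<Longrightarrow> x = y"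
proof -
  assume "x \<preceq> y" "y \<preceq> x"
  have "neg (neg x \<oplus> y) \<oplus> y = neg (neg y \<oplus> x) \<oplus> x" by (rule ax(6))
  thus ?thesis using \<open>x \<preceq> y\<close> \<open>y \<preceq> x\<close> by (simp add: le_def')
qed
lemma le_plus: "x \<preceq> x \<oplus> t"
  unfolding le_def' by (simp only: ax(1) compl' one_l)
lemma le_ex: "x \<preceq> y \<Longrightarrow> y = x \<oplus> neg (neg y \<oplus> x)"
proof -
  assume "x \<preceq> y"
  have "neg (neg y \<oplus> x) \<oplus> x = neg (neg x \<oplus> y) \<oplus> y" by (rule ax(6))
  thus ?thesis using \<open>x \<preceq> y\<close> by (simp add: le_def' ac(2))
qed
lemma le_iff_ex: "x \<preceq> y \<longleftrightarrow> (\<exists>t. y = x \<oplus> t)"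
  using le_ex le_plus by blast
lemma le_trans: "x \<preceq> y \<Longrightarrow> y \<preceq> z \<Longrightarrow> x \<preceq> z"
  unfolding le_iff_ex by (auto intro: exI[of _ "_ \<oplus> _"] simp: ac1)
lemma plus_mono: "x \<preceq> y \<Longrightarrow> x \<oplus> c \<preceq> y \<oplus> c"
  unfolding le_iff_ex by (auto simp: ac1 ac2 ac3)
lemma plus_mono2: "x \<preceq> y \<Longrightarrow> c \<oplus> x \<preceq> c \<oplus> y"
  using plus_mono[of x y c] by (simp add: ac2)
lemma neg_anti: "x \<preceq> y \<Longrightarrow> neg y \<preceq> neg x"
  unfolding le_def' by (simp add: ac(2))
lemma le_one[simp]: "x \<preceq> one" by (simp add: le_def')
lemma zero_le[simp]: "zero \<preceq> x" by (simp add: le_def')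
lemma le_one_iff: "one \<preceq> x \<longleftrightarrow> x = one" using le_antisym by auto

lemma times_comm: "x \<odot> y = y \<odot> x" unfolding times_def by (simp add: ac2)
lemma times_assoc: "x \<odot> y \<odot> z = x \<odot> (y \<odot> z)" unfolding times_def using ac(1) by simp
lemma times_one[simp]: "x \<odot> one = x" "one \<odot> x = x" unfolding times_def by simp_all
lemma times_mono: "x \<preceq> y \<Longrightarrow> x \<odot> c \<preceq> y \<odot> c"
  unfolding times_def by (intro neg_anti plus_mono neg_anti)
lemma times_mono2: "x \<preceq> y \<Longrightarrow> c \<odot> x \<preceq> c \<odot> y"
  using times_mono[of x y c] by (simp add: times_comm)
lemma times_le: "x \<odot> y \<preceq> x"
  using times_mono2[of y one x] by simp
lemma resid: "x \<odot> y \<preceq> z \<longleftrightarrow> x \<preceq> imp y z"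
  unfolding times_def le_def' imp_def' by (simp add: ac(1))
lemma imp_one_iff: "imp x y = one \<longleftrightarrow> x \<preceq> y" by (simp add: le_def' imp_def')
lemma imp_times: "x \<odot> imp x y \<preceq> y" using resid[of "imp x y" x y] times_comm[of x "imp x y"] by simp
lemma min_eq: "y \<preceq> x \<Longrightarrow> y \<preceq> x \<odot> imp x y"
proof -
  assume h: "y \<preceq> x"
  have "neg (neg (neg y) \<oplus> neg x) \<oplus> neg x = neg (neg (neg x) \<oplus> neg y) \<oplus> neg y" by (rule ax(6))
  moreover have "neg (neg x) \<oplus> neg y = one" using h by (simp add: le_def' ac(2))
  ultimately have "neg x \<oplus> neg (neg x \<oplus> y) = neg y" by (simp add: ac(2))
  thus ?thesis unfolding times_def imp_def' by simp
qed
lemma neg_times: "neg (z \<odot> x) = imp z (neg x)" unfolding times_def imp_def' by simp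

lemma less_ne: "\<not> x \<preceq> y \<Longrightarrow> y \<preceq> x" using linear by blast

lemma up_mem: "up X \<Longrightarrow> x \<in> X \<Longrightarrow> x \<preceq> y \<Longrightarrow> y \<in> X" unfolding up_closed_def by blast
lemma up_notmem: "up X \<Longrightarrow> x \<in> X \<Longrightarrow> y \<notin> X \<Longrightarrow> y \<preceq> x"
  using up_mem linear by blast
lemma up_lin: "up X \<Longrightarrow> up Y \<Longrightarrow> X \<subseteq> Y \<or> Y \<subseteq> X"
proof (rule ccontr)
  assume X: "up X" and Y: "up Y" and n: "\<not> (X \<subseteq> Y \<or> Y \<subseteq> X)"
  then obtain x y where xy: "x \<in> X" "x \<notin> Y" "y \<in> Y" "y \<notin> X" by blast
  have "y \<preceq> x" using up_notmem[OF X xy(1) xy(4)] .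
  hence "x \<in> Y" using up_mem[OF Y xy(3)] by blast
  thus False using xy(2) by blast
qed

end
context mvl begin

lemma DD_up: "up Y \<Longrightarrow> up (DD X Y)"
  unfolding up_closed_def DD_def using times_mono up_mem by blast
lemma one_DD: "X \<subseteq> Y \<Longrightarrow> one \<in> DD X Y" unfolding DD_def by auto
lemma DD_anti: "X' \<subseteq> X \<Longrightarrow> DD X Y \<subseteq> DD X' Y" unfolding DD_def by auto
lemma DD_mono: "Y \<subseteq> Y' \<Longrightarrow> DD X Y \<subseteq> DD X Y'" unfolding DD_def by auto

lemma link: "up X \<Longrightarrow> up Y \<Longrightarrow> {z. \<forall>a. a \<notin> Y \<longrightarrow> imp z a \<notin> X} = DD X Y"
proof (intro set_eqI iffI)
  fix z assume X: "up X" and Y: "up Y"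
  { assume z: "z \<in> {z. \<forall>a. a \<notin> Y \<longrightarrow> imp z a \<notin> X}"
    show "z \<in> DD X Y" unfolding DD_def
    proof (intro CollectI ballI, rule ccontr)
      fix f assume f: "f \<in> X" "z \<odot> f \<notin> Y"
      have "f \<preceq> imp z (z \<odot> f)" using resid[of f z "z \<odot> f"] times_comm[of f z] by simp
      hence "imp z (z \<odot> f) \<in> X" using up_mem[OF X f(1)] by blast
      thus False using z f by blast
    qed }
  { assume z: "z \<in> DD X Y"
    show "z \<in> {z. \<forall>a. a \<notin> Y \<longrightarrow> imp z a \<notin> X}"
    proof (intro CollectI allI impI notI)
      fix a assume a: "a \<notin> Y" "imp z a \<in> X"
      hence "z \<odot> imp z a \<in> Y" using z unfolding DD_def by blast
      thus False using up_mem[OF Y _ imp_times[of z a]] a(1) by blast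
    qed }
qed

lemma up_inter: "up X \<Longrightarrow> up Y \<Longrightarrow> up (X \<inter> Y)" unfolding up_closed_def by blast

lemma farr_eq: "up X \<Longrightarrow> up Y \<Longrightarrow> farr oplus neg X Y = DD (X \<inter> Y) Y"
proof -
  assume X: "up X" and Y: "up Y"
  have "farr oplus neg X Y = {z. \<forall>a. a \<notin> Y \<longrightarrow> imp z a \<notin> X \<inter> Y}"
    unfolding farr_def sub_at_def by auto
  thus ?thesis using link[OF up_inter[OF X Y] Y] by simp
qed

lemma kernel_eq: "up X \<Longrightarrow> kernel oplus neg X = DD X X"
  using link[of X X] unfolding kernel_def by simp

definition near where "near X Y \<longleftrightarrow> DD X Y \<subseteq> {one}"

lemma fequiv_sub: "up X \<Longrightarrow> up Y \<Longrightarrow> X \<subseteq> Y \<Longrightarrow> fequiv oplus neg zero X Y \<longleftrightarrow> near X Y"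
proof -
  assume X: "up X" and Y: "up Y" and s: "X \<subseteq> Y"
  have e1: "farr oplus neg X Y = DD X Y" using farr_eq[OF X Y] s by (simp add: Int_absorb2)
  have e2: "farr oplus neg Y X = DD X X" using farr_eq[OF Y X] s by (simp add: Int_absorb1)
  have "DD X X \<subseteq> DD X Y" using DD_mono s by blast
  moreover have "one \<in> DD X X" "one \<in> DD X Y" using one_DD s by auto
  ultimately show ?thesis unfolding fequiv_def e1 e2 near_def mv_one_def by blast
qed

lemma fequiv_sym: "fequiv oplus neg zero X Y \<longleftrightarrow> fequiv oplus neg zero Y X"
  unfolding fequiv_def by blast

end
context mvl begin

declare le_trans[trans]

lemma split:
  assumes nd: "non_discrete oplus neg zero" and z: "z \<noteq> one"
  shows "\<exists>u. u \<noteq> one \<and> z \<preceq> u \<odot> u"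
proof -
  have "mv_less oplus neg zero z one" using z unfolding mv_less_def by simp
  then obtain v where v: "mv_less oplus neg zero z v" "mv_less oplus neg zero v one"
    using nd unfolding non_discrete_def by blast
  hence zv: "z \<preceq> v" "z \<noteq> v" "v \<noteq> one" unfolding mv_less_def by auto
  define v' where "v' = imp v z"
  have v'1: "v' \<noteq> one"
  proof
    assume "v' = one"
    hence "v \<preceq> z" using imp_one_iff v'_def by simp
    hence "z = v" using le_antisym zv(1) by blast
    thus False using zv(2) by blast
  qed
  have m: "z \<preceq> v \<odot> v'" using min_eq[OF zv(1)] v'_def by simp
  show ?thesis
  proof (cases "v' \<preceq> v")
    case True
    have "z \<preceq> v \<odot> v" using m times_mono2[OF True] by (rule le_trans)
    thus ?thesis using zv(3) by blast
  next
    case False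
    hence "v \<preceq> v'" using linear by blast
    have "z \<preceq> v' \<odot> v'" using m times_mono[OF \<open>v \<preceq> v'\<close>] by (rule le_trans)
    thus ?thesis using v'1 by blast
  qed
qed

lemma near_trans:
  assumes nd: "non_discrete oplus neg zero" and Y: "up Y" and Z: "up Z"
    and "near X Y" "near Y Z"
  shows "near X Z"
  unfolding near_def
proof
  fix z assume z: "z \<in> DD X Z"
  show "z \<in> {one}"
  proof (rule ccontr)
    assume "z \<notin> {one}"
    then obtain u where u: "u \<noteq> one" "z \<preceq> u \<odot> u" using split[OF nd] by blast
    have "u \<notin> DD Y Z" using u \<open>near Y Z\<close> unfolding near_def by blast
    then obtain y where y: "y \<in> Y" "u \<odot> y \<notin> Z" unfolding DD_def by blast
    have "u \<in> DD X Y" unfolding DD_def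
    proof (intro CollectI ballI, rule ccontr)
      fix x assume x: "x \<in> X" "u \<odot> x \<notin> Y"
      have ux: "u \<odot> x \<preceq> y" using up_notmem[OF Y y(1) x(2)] .
      have "z \<odot> x \<preceq> u \<odot> u \<odot> x" using times_mono[OF u(2)] .
      also have "u \<odot> u \<odot> x = u \<odot> (u \<odot> x)" by (rule times_assoc)
      also have "u \<odot> (u \<odot> x) \<preceq> u \<odot> y" using times_mono2[OF ux] .
      finally have zx: "z \<odot> x \<preceq> u \<odot> y" .
      have "z \<odot> x \<in> Z" using z x(1) unfolding DD_def by blast
      hence "u \<odot> y \<in> Z" using up_mem[OF Z _ zx] by blast
      thus False using y(2) by blast
    qed
    thus False using u \<open>near X Y\<close> unfolding near_def by blast
  qed
qed

definition filt where "filt F \<longleftrightarrow> up F \<and> DD F F \<subseteq> {one}"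

lemma filt_up: "filt F \<Longrightarrow> up F" unfolding filt_def by blast

lemma filt_of: "mv_filter oplus neg zero F \<Longrightarrow> filt F"
  unfolding mv_filter_def filt_def using kernel_eq by (auto simp: mv_one_def)

lemma kerD:
  assumes nd: "non_discrete oplus neg zero" and F: "filt F" and G: "filt G" and s: "F \<subseteq> G"
  shows "near (DD F G) (DD F G)"
  unfolding near_def
proof
  fix z assume z: "z \<in> DD (DD F G) (DD F G)"
  have Fu: "up F" and Gu: "up G" using F G filt_up by blast+
  show "z \<in> {one}"
  proof (rule ccontr)
    assume "z \<notin> {one}"
    then obtain u where u: "u \<noteq> one" "z \<preceq> u \<odot> u" using split[OF nd] by blast
    have "u \<notin> DD F F" "u \<notin> DD G G" using u F G unfolding filt_def by auto
    then obtain f g where fg: "f \<in> F" "u \<odot> f \<notin> F" "g \<in> G" "u \<odot> g \<notin> G"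
      unfolding DD_def by blast
    define x where "x = u \<odot> f"
    define w where "w = imp x g"
    have w: "w \<in> DD F G" unfolding DD_def
    proof (intro CollectI ballI)
      fix f' assume f': "f' \<in> F"
      have xf: "x \<preceq> f'" using up_notmem[OF Fu f'] fg(2) x_def by blast
      show "w \<odot> f' \<in> G"
      proof (cases "x \<preceq> g")
        case True
        hence "w = one" using imp_one_iff w_def by simp
        thus ?thesis using f' s by (auto simp: times_comm)
      next
        case False
        hence "g \<preceq> x" using linear by blast
        hence "g \<preceq> x \<odot> w" using min_eq w_def by simp
        also have "x \<odot> w \<preceq> f' \<odot> w" using times_mono[OF xf] .
        also have "f' \<odot> w = w \<odot> f'" by (rule times_comm)
        finally show ?thesis using up_mem[OF Gu fg(3)] by blast
      qed
    qed
    have "z \<odot> w \<in> DD F G" using z w unfolding DD_def by blast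
    hence zwf: "z \<odot> w \<odot> f \<in> G" using fg(1) unfolding DD_def by blast
    have "z \<odot> w \<odot> f \<preceq> u \<odot> u \<odot> w \<odot> f" using times_mono[OF times_mono[OF u(2)]] .
    also have "u \<odot> u \<odot> w \<odot> f = u \<odot> (x \<odot> w)" unfolding x_def
      by (simp only: times_assoc times_comm[of w f])
    also have "u \<odot> (x \<odot> w) \<preceq> u \<odot> g" using times_mono2[OF imp_times[of x g]] w_def by simp
    finally have "z \<odot> w \<odot> f \<preceq> u \<odot> g" .
    hence "u \<odot> g \<in> G" using up_mem[OF Gu zwf] by blast
    thus False using fg(4) by blast
  qed
qed

end
context mvl begin

lemma times_lcomm: "x \<odot> (y \<odot> z) = y \<odot> (x \<odot> z)" by (simp only: times_assoc[symmetric] times_comm[of x y])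
lemmas tac = times_assoc times_comm times_lcomm

lemma near_anti: "X' \<subseteq> X \<Longrightarrow> near X' Y \<Longrightarrow> near X Y"
  unfolding near_def using DD_anti by blast
lemma near_mono: "Y \<subseteq> Y' \<Longrightarrow> near X Y' \<Longrightarrow> near X Y"
  unfolding near_def using DD_mono by blast

lemma fequiv_trans:
  assumes nd: "non_discrete oplus neg zero" and X: "up X" and Y: "up Y" and Z: "up Z"
    and xy: "fequiv oplus neg zero X Y" and yz: "fequiv oplus neg zero Y Z"
  shows "fequiv oplus neg zero X Z"
proof -
  have c1: "X \<subseteq> Y \<or> Y \<subseteq> X" and c2: "Y \<subseteq> Z \<or> Z \<subseteq> Y" and c3: "X \<subseteq> Z \<or> Z \<subseteq> X"
    using up_lin X Y Z by blast+
  have sXY: "X \<subseteq> Y \<Longrightarrow> near X Y" using fequiv_sub[OF X Y] xy by blast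
  have sYX: "Y \<subseteq> X \<Longrightarrow> near Y X" using fequiv_sub[OF Y X] xy fequiv_sym by blast
  have sYZ: "Y \<subseteq> Z \<Longrightarrow> near Y Z" using fequiv_sub[OF Y Z] yz by blast
  have sZY: "Z \<subseteq> Y \<Longrightarrow> near Z Y" using fequiv_sub[OF Z Y] yz fequiv_sym by blast
  have gXZ: "X \<subseteq> Z \<Longrightarrow> near X Z \<Longrightarrow> ?thesis" using fequiv_sub[OF X Z] by blast
  have gZX: "Z \<subseteq> X \<Longrightarrow> near Z X \<Longrightarrow> ?thesis" using fequiv_sub[OF Z X] fequiv_sym by blast
  show ?thesis
  proof (cases "X \<subseteq> Y")
    case True
    show ?thesis
    proof (cases "Y \<subseteq> Z")
      case True
      have "near X Z" using near_trans[OF nd Y Z sXY[OF \<open>X \<subseteq> Y\<close>] sYZ[OF True]] .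
      then show ?thesis using gXZ \<open>X \<subseteq> Y\<close> True by blast
    next
      case False
      hence "Z \<subseteq> Y" using c2 by blast
      have nxy: "near X Y" using sXY[OF \<open>X \<subseteq> Y\<close>] .
      show ?thesis
      proof (cases "X \<subseteq> Z")
        case True
        then show ?thesis using gXZ near_mono[OF \<open>Z \<subseteq> Y\<close> nxy] by blast
      next
        case False
        hence "Z \<subseteq> X" using c3 by blast
        then show ?thesis using gZX near_mono[OF \<open>X \<subseteq> Y\<close> sZY[OF \<open>Z \<subseteq> Y\<close>]] by blast
      qed
    qed
  next
    case False
    hence "Y \<subseteq> X" using c1 by blast
    show ?thesis
    proof (cases "Y \<subseteq> Z")
      case True
      show ?thesis
      proof (cases "X \<subseteq> Z")
        case True
        then show ?thesis using gXZ near_anti[OF \<open>Y \<subseteq> X\<close> sYZ[OF \<open>Y \<subseteq> Z\<close>]] by blast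
      next
        case False
        hence "Z \<subseteq> X" using c3 by blast
        then show ?thesis using gZX near_anti[OF \<open>Y \<subseteq> Z\<close> sYX[OF \<open>Y \<subseteq> X\<close>]] by blast
      qed
    next
      case False
      hence "Z \<subseteq> Y" using c2 by blast
      have "near Z X" using near_trans[OF nd Y X sZY[OF \<open>Z \<subseteq> Y\<close>] sYX[OF \<open>Y \<subseteq> X\<close>]] .
      then show ?thesis using gZX \<open>Y \<subseteq> X\<close> \<open>Z \<subseteq> Y\<close> by blast
    qed
  qed
qed

lemma fplus_eq: "fplus oplus neg zero F = {z. neg z \<notin> F}"
  unfolding fplus_def sub_at_def imp_def' by simp

lemma fplus_up: "up F \<Longrightarrow> up (fplus oplus neg zero F)"
  unfolding fplus_eq up_closed_def using neg_anti by blast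

lemma fplus_near:
  assumes F1: "up F1" and F2: "up F2" and s: "F1 \<subseteq> F2" and n: "near F1 F2"
  shows "fequiv oplus neg zero (fplus oplus neg zero F1) (fplus oplus neg zero F2)"
proof -
  have s2: "fplus oplus neg zero F2 \<subseteq> fplus oplus neg zero F1" using s unfolding fplus_eq by blast
  have "near (fplus oplus neg zero F2) (fplus oplus neg zero F1)" unfolding near_def
  proof
    fix z assume z: "z \<in> DD (fplus oplus neg zero F2) (fplus oplus neg zero F1)"
    show "z \<in> {one}"
    proof (rule ccontr)
      assume "z \<notin> {one}"
      hence "z \<notin> DD F1 F2" using n unfolding near_def by blast
      then obtain f where f: "f \<in> F1" "z \<odot> f \<notin> F2" unfolding DD_def by blast
      have "neg (z \<odot> f) \<in> fplus oplus neg zero F2" using f unfolding fplus_eq by simp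
      hence "z \<odot> neg (z \<odot> f) \<in> fplus oplus neg zero F1" using z unfolding DD_def by blast
      hence "neg (z \<odot> neg (z \<odot> f)) \<notin> F1" unfolding fplus_eq by simp
      moreover have "neg (z \<odot> neg (z \<odot> f)) = imp z (z \<odot> f)"
        using neg_times[of z "neg (z \<odot> f)"] by (simp only: nn)
      ultimately have "imp z (z \<odot> f) \<notin> F1" by simp
      moreover have "f \<preceq> imp z (z \<odot> f)" using resid[of f z "z \<odot> f"] times_comm[of f z] by simp
      ultimately show False using up_mem[OF F1 f(1)] by blast
    qed
  qed
  thus ?thesis using fequiv_sub[OF fplus_up[OF F2] fplus_up[OF F1] s2] fequiv_sym by blast
qed

lemma DD_self: "filt G \<Longrightarrow> DD G G = {one}" unfolding filt_def using one_DD by blast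
lemma DD_one: "DD {one} Y = Y" unfolding DD_def by simp
lemma up_one: "up {one}" unfolding up_closed_def using le_one_iff by blast
lemma fequiv_one: "fequiv oplus neg zero {one} {one}"
  using fequiv_sub[OF up_one up_one] DD_one unfolding near_def by blast

lemma farr_filt: "filt F \<Longrightarrow> filt G \<Longrightarrow> farr oplus neg F G = DD (F \<inter> G) G"
  using farr_eq filt_up by blast

lemma farrA:
  assumes nd: "non_discrete oplus neg zero" and F1: "filt F1" and F2: "filt F2" and G: "filt G"
    and s: "F1 \<subseteq> F2" and n: "near F1 F2"
  shows "fequiv oplus neg zero (farr oplus neg F1 G) (farr oplus neg F2 G)"
proof -
  have c1: "G \<subseteq> F1 \<or> F1 \<subseteq> G" and c2: "G \<subseteq> F2 \<or> F2 \<subseteq> G" using up_lin filt_up F1 F2 G by blast+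
  show ?thesis
  proof (cases "G \<subseteq> F1")
    case True
    hence "farr oplus neg F1 G = {one}" "farr oplus neg F2 G = {one}"
      using farr_filt F1 F2 G s DD_self by (simp_all add: Int_absorb1 subset_trans)
    then show ?thesis using fequiv_one by simp
  next
    case False
    hence FG: "F1 \<subseteq> G" using c1 by blast
    show ?thesis
    proof (cases "G \<subseteq> F2")
      case True
      hence e: "farr oplus neg F1 G = DD F1 G" "farr oplus neg F2 G = {one}"
        using farr_filt F1 F2 G FG DD_self by (simp_all add: Int_absorb1 Int_absorb2)
      have "near {one} (DD F1 G)" unfolding near_def DD_one
        using DD_mono[OF True, of F1] n unfolding near_def by blast
      moreover have "{one} \<subseteq> DD F1 G" using one_DD FG by blast
      ultimately show ?thesis unfolding e
        using fequiv_sub[OF up_one DD_up[OF filt_up[OF G]]] fequiv_sym by blast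
    next
      case False
      hence F2G: "F2 \<subseteq> G" using c2 by blast
      have e: "farr oplus neg F1 G = DD F1 G" "farr oplus neg F2 G = DD F2 G"
        using farr_filt F1 F2 G FG F2G by (simp_all add: Int_absorb2)
      have sub: "DD F2 G \<subseteq> DD F1 G" using DD_anti s by blast
      have Gu: "up G" using G filt_up by blast
      have "near (DD F2 G) (DD F1 G)" unfolding near_def
      proof
        fix z assume z: "z \<in> DD (DD F2 G) (DD F1 G)"
        show "z \<in> {one}"
        proof (rule ccontr)
          assume "z \<notin> {one}"
          then obtain u where u: "u \<noteq> one" "z \<preceq> u \<odot> u" using split[OF nd] by blast
          have "u \<notin> DD (DD F2 G) (DD F2 G)" using kerD[OF nd F2 G F2G] u unfolding near_def by blast
          then obtain w f2 where w: "w \<in> DD F2 G" "f2 \<in> F2" "u \<odot> w \<odot> f2 \<notin> G"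
            unfolding DD_def by blast
          have "u \<notin> DD F1 F2" using n u unfolding near_def by blast
          then obtain f1 where f1: "f1 \<in> F1" "u \<odot> f1 \<notin> F2" unfolding DD_def by blast
          have l1: "u \<odot> f1 \<preceq> f2" using up_notmem[OF filt_up[OF F2] w(2) f1(2)] .
          have "z \<odot> w \<in> DD F1 G" using z w unfolding DD_def by blast
          hence zin: "z \<odot> w \<odot> f1 \<in> G" using f1 unfolding DD_def by blast
          have "z \<odot> w \<odot> f1 \<preceq> u \<odot> u \<odot> w \<odot> f1" using times_mono[OF times_mono[OF u(2)]] .
          also have "u \<odot> u \<odot> w \<odot> f1 = (u \<odot> w) \<odot> (u \<odot> f1)" by (simp add: tac)
          also have "(u \<odot> w) \<odot> (u \<odot> f1) \<preceq> u \<odot> w \<odot> f2" using times_mono2[OF l1] .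
          finally have "z \<odot> w \<odot> f1 \<preceq> u \<odot> w \<odot> f2" .
          thus False using up_mem[OF Gu zin] w(3) by blast
        qed
      qed
      thus ?thesis unfolding e using fequiv_sub[OF DD_up[OF Gu] DD_up[OF Gu] sub] fequiv_sym by blast
    qed
  qed
qed

lemma farrB:
  assumes nd: "non_discrete oplus neg zero" and F: "filt F" and G1: "filt G1" and G2: "filt G2"
    and s: "G1 \<subseteq> G2" and n: "near G1 G2"
  shows "fequiv oplus neg zero (farr oplus neg F G1) (farr oplus neg F G2)"
proof -
  have c1: "G1 \<subseteq> F \<or> F \<subseteq> G1" and c2: "G2 \<subseteq> F \<or> F \<subseteq> G2" using up_lin filt_up F G1 G2 by blast+
  show ?thesis
  proof (cases "G2 \<subseteq> F")
    case True
    hence "farr oplus neg F G1 = {one}" "farr oplus neg F G2 = {one}"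
      using farr_filt F G1 G2 s DD_self by (simp_all add: Int_absorb1 subset_trans)
    then show ?thesis using fequiv_one by simp
  next
    case False
    hence FG2: "F \<subseteq> G2" using c2 by blast
    show ?thesis
    proof (cases "G1 \<subseteq> F")
      case True
      hence e: "farr oplus neg F G1 = {one}" "farr oplus neg F G2 = DD F G2"
        using farr_filt F G1 G2 FG2 DD_self by (simp_all add: Int_absorb1 Int_absorb2)
      have "near {one} (DD F G2)" unfolding near_def DD_one
        using DD_anti[OF True, of G2] n unfolding near_def by blast
      moreover have "{one} \<subseteq> DD F G2" using one_DD FG2 by blast
      ultimately show ?thesis unfolding e
        using fequiv_sub[OF up_one DD_up[OF filt_up[OF G2]]] by blast
    next
      case False
      hence FG1: "F \<subseteq> G1" using c1 by blast
      have e: "farr oplus neg F G1 = DD F G1" "farr oplus neg F G2 = DD F G2"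
        using farr_filt F G1 G2 FG1 FG2 by (simp_all add: Int_absorb2)
      have sub: "DD F G1 \<subseteq> DD F G2" using DD_mono s by blast
      have Gu: "up G1" "up G2" using G1 G2 filt_up by blast+
      have "near (DD F G1) (DD F G2)" unfolding near_def
      proof
        fix z assume z: "z \<in> DD (DD F G1) (DD F G2)"
        show "z \<in> {one}"
        proof (rule ccontr)
          assume "z \<notin> {one}"
          then obtain u where u: "u \<noteq> one" "z \<preceq> u \<odot> u" using split[OF nd] by blast
          have "u \<notin> DD (DD F G1) (DD F G1)" using kerD[OF nd F G1 FG1] u unfolding near_def by blast
          then obtain w f where w: "w \<in> DD F G1" "f \<in> F" "u \<odot> w \<odot> f \<notin> G1"
            unfolding DD_def by blast
          have "u \<notin> DD G1 G2" using n u unfolding near_def by blast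
          then obtain g where g: "g \<in> G1" "u \<odot> g \<notin> G2" unfolding DD_def by blast
          have l1: "u \<odot> w \<odot> f \<preceq> g" using up_notmem[OF Gu(1) g(1) w(3)] .
          have "z \<odot> w \<in> DD F G2" using z w unfolding DD_def by blast
          hence zin: "z \<odot> w \<odot> f \<in> G2" using w unfolding DD_def by blast
          have "z \<odot> w \<odot> f \<preceq> u \<odot> u \<odot> w \<odot> f" using times_mono[OF times_mono[OF u(2)]] .
          also have "u \<odot> u \<odot> w \<odot> f = u \<odot> (u \<odot> w \<odot> f)" by (simp add: tac)
          also have "u \<odot> (u \<odot> w \<odot> f) \<preceq> u \<odot> g" using times_mono2[OF l1] .
          finally have "z \<odot> w \<odot> f \<preceq> u \<odot> g" .
          thus False using up_mem[OF Gu(2) zin] g(2) by blast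
        qed
      qed
      thus ?thesis unfolding e using fequiv_sub[OF DD_up[OF Gu(1)] DD_up[OF Gu(2)] sub] by blast
    qed
  qed
qed

end
context mvl begin

lemma nearE: "up X \<Longrightarrow> up Y \<Longrightarrow> fequiv oplus neg zero X Y \<Longrightarrow>
   (X \<subseteq> Y \<and> near X Y) \<or> (Y \<subseteq> X \<and> near Y X)"
proof -
  assume X: "up X" and Y: "up Y" and e: "fequiv oplus neg zero X Y"
  show ?thesis
  proof (cases "X \<subseteq> Y")
    case True
    then show ?thesis using fequiv_sub[OF X Y True] e by blast
  next
    case False
    hence "Y \<subseteq> X" using up_lin[OF X Y] by blast
    then show ?thesis using fequiv_sub[OF Y X] e fequiv_sym by blast
  qed
qed

lemma farr_up: "filt F \<Longrightarrow> filt G \<Longrightarrow> up (farr oplus neg F G)"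
proof -
  assume "filt F" "filt G"
  thus ?thesis using farr_filt[of F G] DD_up[OF filt_up[of G]] by simp
qed

lemma main:
  assumes nd: "non_discrete oplus neg zero"
  shows "equiv {F. mv_filter oplus neg zero F}
           {(F, G). mv_filter oplus neg zero F \<and> mv_filter oplus neg zero G \<and>
                    fequiv oplus neg zero F G} \<and>
         (\<forall>F1 F2 G1 G2.
           mv_filter oplus neg zero F1 \<longrightarrow> mv_filter oplus neg zero F2 \<longrightarrow>
           mv_filter oplus neg zero G1 \<longrightarrow> mv_filter oplus neg zero G2 \<longrightarrow>
           fequiv oplus neg zero F1 F2 \<longrightarrow> fequiv oplus neg zero G1 G2 \<longrightarrow>
           fequiv oplus neg zero (fplus oplus neg zero F1) (fplus oplus neg zero F2) \<and>
           fequiv oplus neg zero (farr oplus neg F1 G1) (farr oplus neg F2 G2))"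
proof (intro conjI allI impI)
  show "equiv {F. mv_filter oplus neg zero F}
           {(F, G). mv_filter oplus neg zero F \<and> mv_filter oplus neg zero G \<and>
                    fequiv oplus neg zero F G}"
  proof (rule equivI)
    show "refl_on {F. mv_filter oplus neg zero F}
           {(F, G). mv_filter oplus neg zero F \<and> mv_filter oplus neg zero G \<and>
                    fequiv oplus neg zero F G}"
    proof (rule refl_onI)
      fix F assume "F \<in> {F. mv_filter oplus neg zero F}"
      hence f: "filt F" "mv_filter oplus neg zero F" using filt_of by auto
      have "fequiv oplus neg zero F F" using fequiv_sub[of F F] f unfolding filt_def near_def by blast
      thus "(F, F) \<in> {(F, G). mv_filter oplus neg zero F \<and> mv_filter oplus neg zero G \<and>
                    fequiv oplus neg zero F G}" using f by simp
    qed
    show "sym {(F, G). mv_filter oplus neg zero F \<and> mv_filter oplus neg zero G \<and>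
                    fequiv oplus neg zero F G}"
      by (rule symI) (auto simp: fequiv_sym)
    show "trans {(F, G). mv_filter oplus neg zero F \<and> mv_filter oplus neg zero G \<and>
                    fequiv oplus neg zero F G}"
    proof (rule transI)
      fix X Y Z assume xy: "(X, Y) \<in> {(F, G). mv_filter oplus neg zero F \<and> mv_filter oplus neg zero G \<and>
                    fequiv oplus neg zero F G}" and yz: "(Y, Z) \<in> {(F, G). mv_filter oplus neg zero F \<and> mv_filter oplus neg zero G \<and>
                    fequiv oplus neg zero F G}"
      have "fequiv oplus neg zero X Z"
        using fequiv_trans[OF nd filt_up[OF filt_of] filt_up[OF filt_of] filt_up[OF filt_of], of X Y Z] xy yz by blast
      thus "(X, Z) \<in> {(F, G). mv_filter oplus neg zero F \<and> mv_filter oplus neg zero G \<and>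
                    fequiv oplus neg zero F G}" using xy yz by blast
    qed
  qed blast
next
  fix F1 F2 G1 G2
  assume a: "mv_filter oplus neg zero F1" "mv_filter oplus neg zero F2"
    "mv_filter oplus neg zero G1" "mv_filter oplus neg zero G2"
    "fequiv oplus neg zero F1 F2" "fequiv oplus neg zero G1 G2"
  have f: "filt F1" "filt F2" "filt G1" "filt G2" using a filt_of by auto
  have u: "up F1" "up F2" "up G1" "up G2" using f filt_up by auto
  show "fequiv oplus neg zero (fplus oplus neg zero F1) (fplus oplus neg zero F2)"
    using nearE[OF u(1,2) a(5)] fplus_near[OF u(1,2)] fplus_near[OF u(2,1)] fequiv_sym by blast
  have 1: "fequiv oplus neg zero (farr oplus neg F1 G1) (farr oplus neg F2 G1)"
    using nearE[OF u(1,2) a(5)] farrA[OF nd f(1,2,3)] farrA[OF nd f(2,1,3)] fequiv_sym by blast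
  have 2: "fequiv oplus neg zero (farr oplus neg F2 G1) (farr oplus neg F2 G2)"
    using nearE[OF u(3,4) a(6)] farrB[OF nd f(2,3,4)] farrB[OF nd f(2,4,3)] fequiv_sym by blast
  show "fequiv oplus neg zero (farr oplus neg F1 G1) (farr oplus neg F2 G2)"
    using fequiv_trans[OF nd farr_up[OF f(1,3)] farr_up[OF f(2,3)] farr_up[OF f(2,4)] 1 2] .
qed

end

theorem mainTheorem17:
  fixes oplus :: "'a \<Rightarrow> 'a \<Rightarrow> 'a" and neg :: "'a \<Rightarrow> 'a" and zero :: 'a
  assumes "linear_mv oplus neg zero"
    and "non_discrete oplus neg zero"
  shows "equiv {F. mv_filter oplus neg zero F}
           {(F, G). mv_filter oplus neg zero F \<and> mv_filter oplus neg zero G \<and>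
                    fequiv oplus neg zero F G} \<and>
         (\<forall>F1 F2 G1 G2.
           mv_filter oplus neg zero F1 \<longrightarrow> mv_filter oplus neg zero F2 \<longrightarrow>
           mv_filter oplus neg zero G1 \<longrightarrow> mv_filter oplus neg zero G2 \<longrightarrow>
           fequiv oplus neg zero F1 F2 \<longrightarrow> fequiv oplus neg zero G1 G2 \<longrightarrow>
           fequiv oplus neg zero (fplus oplus neg zero F1) (fplus oplus neg zero F2) \<and>
           fequiv oplus neg zero (farr oplus neg F1 G1) (farr oplus neg F2 G2))"
proof -
  interpret mvl oplus neg zero using assms(1) by unfold_locales
  show ?thesis using main[OF assms(2)] .
qed

end
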